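(* Let $G$ be a graph with $n$ vertices. Then \[\chi(G) \leq \frac{1}{2} \left(\omega(G) + \frac{\Delta(G) + 1 + n}{2} \right) - \frac{\eta(G)}{4}.\]
   Context: All graphs are finite and simple with non-empty vertex set. $\chi$ is the chromatic number, $\omega$ the clique number, $\Delta$ the maximum degree. The chromatic excess of $G$ is $\eta(G) = \max_{H} \left(|H| - 3\chi(H)\right)$, where the maximum ranges over all induced subgraphs $H$ of $G$ with non-empty vertex set and $|H|$ is the number of vertices of $H$. *)

theory Defs
  imports Main "HOL-Library.Extended_Nat"
begin

definition simple_graph :: "'a set \<Rightarrow> ('a \<Rightarrow> 'a \<Rightarrow> bool) \<Rightarrow> bool" where
  "simple_graph V E \<longleftrightarrow> finite V \<and> V \<noteq> {} \<and>
     (\<forall>u v. E u v \<longrightarrow> u \<in> V \<and> v \<in> V) \<and>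
     (\<forall>u v. E u v \<longrightarrow> E v u) \<and> (\<forall>v. \<not> E v v)"

definition proper_colouring :: "'a set \<Rightarrow> ('a \<Rightarrow> 'a \<Rightarrow> bool) \<Rightarrow> nat \<Rightarrow> ('a \<Rightarrow> nat) \<Rightarrow> bool" where
  "proper_colouring S E k c \<longleftrightarrow> (\<forall>v\<in>S. c v < k) \<and> (\<forall>u\<in>S. \<forall>v\<in>S. E u v \<longrightarrow> c u \<noteq> c v)"

definition chi :: "'a set \<Rightarrow> ('a \<Rightarrow> 'a \<Rightarrow> bool) \<Rightarrow> nat" where
  "chi S E = (LEAST k. \<exists>c. proper_colouring S E k c)"

definition is_clique :: "('a \<Rightarrow> 'a \<Rightarrow> bool) \<Rightarrow> 'a set \<Rightarrow> bool" where
  "is_clique E K \<longleftrightarrow> (\<forall>u\<in>K. \<forall>v\<in>K. u \<noteq> v \<longrightarrow> E u v)"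

definition omega :: "'a set \<Rightarrow> ('a \<Rightarrow> 'a \<Rightarrow> bool) \<Rightarrow> nat" where
  "omega S E = Max {card K | K. K \<subseteq> S \<and> is_clique E K}"

definition degree :: "'a set \<Rightarrow> ('a \<Rightarrow> 'a \<Rightarrow> bool) \<Rightarrow> 'a \<Rightarrow> nat" where
  "degree S E v = card {u\<in>S. E v u}"

definition max_degree :: "'a set \<Rightarrow> ('a \<Rightarrow> 'a \<Rightarrow> bool) \<Rightarrow> nat" where
  "max_degree S E = Max (degree S E ` S)"

definition eta :: "'a set \<Rightarrow> ('a \<Rightarrow> 'a \<Rightarrow> bool) \<Rightarrow> int" where
  "eta V E = Max {int (card H) - 3 * int (chi H E) | H. H \<subseteq> V \<and> H \<noteq> {}}"

end

theory Submission
  imports Defs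
begin

lemma chi_le:
  assumes "proper_colouring S E k c"
  shows "chi S E \<le> k"
  unfolding chi_def by (rule Least_le) (use assms in blast)

lemma colour_exists:
  assumes "finite A" "\<forall>v. \<not> E v v"
  shows "\<exists>c. proper_colouring A E (card A) c"
proof -
  obtain h where h: "bij_betw h A {0..<card A}" using ex_bij_betw_finite_nat[OF assms(1)] by blast
  have "proper_colouring A E (card A) h"
    unfolding proper_colouring_def
  proof safe
    fix v assume "v \<in> A" then show "h v < card A" using h bij_betwE by fastforce
  next
    fix u v assume "u \<in> A" "v \<in> A" "E u v" "h u = h v"
    then have "u = v" using h unfolding bij_betw_def inj_on_def by blast
    then show False using assms(2) \<open>E u v\<close> by blast
  qed
  then show ?thesis by blast
qed

lemma chi_colouring:
  assumes "finite A" "\<forall>v. \<not> E v v"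
  shows "\<exists>c. proper_colouring A E (chi A E) c"
  using LeastI_ex[of "\<lambda>k. \<exists>c. proper_colouring A E k c"] colour_exists[of A E, OF assms]
  unfolding chi_def by blast

lemma chi_union:
  assumes "finite A" "finite B" "\<forall>v. \<not> E v v"
  shows "chi (A \<union> B) E \<le> chi A E + chi B E"
proof -
  obtain ca where ca: "proper_colouring A E (chi A E) ca" using chi_colouring[of A E, OF assms(1,3)] by blast
  obtain cb where cb: "proper_colouring B E (chi B E) cb" using chi_colouring[of B E, OF assms(2,3)] by blast
  define c where "c v = (if v \<in> A then ca v else chi A E + cb v)" for v
  have "proper_colouring (A \<union> B) E (chi A E + chi B E) c"
    unfolding proper_colouring_def
  proof (intro conjI ballI impI notI)
    fix v assume "v \<in> A \<union> B"
    then show "c v < chi A E + chi B E" using ca cb unfolding proper_colouring_def c_def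
      by (cases "v \<in> A") auto
  next
    fix u v assume uv: "u \<in> A \<union> B" "v \<in> A \<union> B" "E u v" "c u = c v"
    show False
    proof (cases "u \<in> A")
      case True
      then show False
      proof (cases "v \<in> A")
        case True
        then show False using uv \<open>u \<in> A\<close> ca unfolding proper_colouring_def c_def by auto
      next
        case False
        then show False using uv \<open>u \<in> A\<close> ca unfolding proper_colouring_def c_def by auto
      qed
    next
      case False
      then show False
      proof (cases "v \<in> A")
        case True
        then show False using uv \<open>u \<notin> A\<close> ca unfolding proper_colouring_def c_def by auto
      next
        case False
        then show False using uv \<open>u \<notin> A\<close> cb unfolding proper_colouring_def c_def by auto
      qed
    qed
  qed
  then show ?thesis by (rule chi_le)
qed

lemma chi_le_partition:
  assumes "finite P" "\<Union>P = S" "\<forall>B\<in>P. \<forall>B'\<in>P. B \<noteq> B' \<longrightarrow> B \<inter> B' = {}"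
    "\<forall>B\<in>P. \<forall>u\<in>B. \<forall>v\<in>B. \<not> E u v"
  shows "chi S E \<le> card P"
proof -
  obtain h where h: "bij_betw h P {0..<card P}" using ex_bij_betw_finite_nat[OF assms(1)] by blast
  define bl where "bl v = (SOME B. B \<in> P \<and> v \<in> B)" for v
  have bl: "bl v \<in> P \<and> v \<in> bl v" if "v \<in> S" for v
  proof -
    have "\<exists>B. B\<in>P \<and> v\<in>B" using assms(2) that by blast
    then show ?thesis unfolding bl_def by (rule someI_ex)
  qed
  have "proper_colouring S E (card P) (\<lambda>v. h (bl v))"
    unfolding proper_colouring_def
  proof safe
    fix v assume "v \<in> S" then show "h (bl v) < card P" using h bl bij_betwE by fastforce
  next
    fix u v assume uv: "u \<in> S" "v \<in> S" "E u v" "h (bl u) = h (bl v)"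
    then have "bl u = bl v" using h bl unfolding bij_betw_def inj_on_def by blast
    then show False using assms(4) bl uv by metis
  qed
  then show ?thesis by (rule chi_le)
qed

lemma greedy:
  assumes G: "simple_graph V E"
  shows "A \<subseteq> V \<Longrightarrow> \<exists>c. proper_colouring A E (max_degree V E + 1) c"
proof -
  have fin: "finite V" using G unfolding simple_graph_def by blast
  assume "A \<subseteq> V"
  then have "finite A" using fin finite_subset by blast
  then show ?thesis using \<open>A \<subseteq> V\<close>
  proof (induct A rule: finite_induct)
    case empty
    then show ?case unfolding proper_colouring_def by blast
  next
    case (insert v A)
    then obtain c where c: "proper_colouring A E (max_degree V E + 1) c" by blast
    let ?N = "{u\<in>A. E v u}"
    have "card ?N \<le> degree V E v"
      unfolding degree_def using insert fin by (intro card_mono) auto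
    also have "\<dots> \<le> max_degree V E"
      unfolding max_degree_def using insert fin by (intro Max_ge) auto
    finally have "card (c ` ?N) \<le> max_degree V E" using card_image_le[of ?N c] insert by force
    then have "card (c ` ?N) < card {0..<max_degree V E + 1}" by simp
    moreover have "finite (c ` ?N)" using insert by auto
    ultimately have "\<not> {0..<max_degree V E + 1} \<subseteq> c ` ?N"
      using card_mono[of "c ` ?N" "{0..<max_degree V E + 1}"] by linarith
    then have "\<exists>i. i \<in> {0..<max_degree V E + 1} \<and> i \<notin> c ` ?N" by blast
    then obtain i where i: "i < max_degree V E + 1" "i \<notin> c ` ?N" by auto
    have sym: "\<And>x y. E x y \<Longrightarrow> E y x" using G unfolding simple_graph_def by blast
    have "proper_colouring (insert v A) E (max_degree V E + 1) (c(v := i))"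
      unfolding proper_colouring_def
    proof (intro conjI ballI impI notI)
      fix w assume "w \<in> insert v A"
      then show "(c(v := i)) w < max_degree V E + 1" using c i unfolding proper_colouring_def by auto
    next
      fix x y assume xy: "x \<in> insert v A" "y \<in> insert v A" "E x y" "(c(v := i)) x = (c(v := i)) y"
      have nv: "\<not> E v v" using G unfolding simple_graph_def by blast
      show False
      proof (cases "x = v")
        case True
        then have "y \<noteq> v" using nv xy by blast
        then have "y \<in> ?N" using xy True by auto
        then show False using xy True \<open>y \<noteq> v\<close> i(2) by auto
      next
        case False
        note xv = False
        show False
        proof (cases "y = v")
          case True
          then have "x \<in> ?N" using xy xv sym by auto
          then show False using xy True xv i(2) by (metis fun_upd_other fun_upd_same image_eqI)
        next
          case False
          then show False using xy xv c unfolding proper_colouring_def by auto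
        qed
      qed
    qed
    then show ?case by blast
  qed
qed

lemma chi_le_maxdeg:
  assumes "simple_graph V E"
  shows "chi V E \<le> max_degree V E + 1"
  using greedy[OF assms, of V] chi_le by blast


definition matchp :: "'a set \<Rightarrow> ('a \<Rightarrow> 'a \<Rightarrow> bool) \<Rightarrow> 'a set \<Rightarrow> ('a \<Rightarrow> 'a) \<Rightarrow> bool" where
  "matchp S E W p \<longleftrightarrow> W \<subseteq> S \<and> (\<forall>a\<in>W. p a \<in> W \<and> p a \<noteq> a \<and> p (p a) = a \<and> \<not> E a (p a))"

lemma chi_matching:
  assumes fin: "finite S" and m: "matchp S E W p" and irr: "\<forall>v. \<not> E v v"
  shows "2 * chi S E + card W \<le> 2 * card S"
proof -
  have WS: "W \<subseteq> S" and pW: "\<And>a. a \<in> W \<Longrightarrow> p a \<in> W" and pn: "\<And>a. a \<in> W \<Longrightarrow> p a \<noteq> a"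
    and pp: "\<And>a. a \<in> W \<Longrightarrow> p (p a) = a" and pe: "\<And>a. a \<in> W \<Longrightarrow> \<not> E a (p a)"
    using m unfolding matchp_def by auto
  have finW: "finite W" using WS fin finite_subset by blast
  let ?P1 = "(\<lambda>a. {a, p a}) ` W"
  let ?P2 = "(\<lambda>u. {u}) ` (S - W)"
  have U1: "\<Union>?P1 = W" using pW by auto
  have disj1: "\<forall>c1\<in>?P1. \<forall>c2\<in>?P1. c1 \<noteq> c2 \<longrightarrow> c1 \<inter> c2 = {}"
  proof (intro ballI impI)
    fix c1 c2 assume c: "c1 \<in> ?P1" "c2 \<in> ?P1" "c1 \<noteq> c2"
    then obtain a b where ab: "a \<in> W" "b \<in> W" "c1 = {a, p a}" "c2 = {b, p b}" by auto
    show "c1 \<inter> c2 = {}"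
    proof (rule ccontr)
      assume "c1 \<inter> c2 \<noteq> {}"
      then have "a = b \<or> a = p b \<or> p a = b \<or> p a = p b" using ab by auto
      then have "c1 = c2" using ab pp[OF ab(1)] pp[OF ab(2)] by (metis insert_commute)
      then show False using c by blast
    qed
  qed
  have card2: "\<forall>c\<in>?P1. card c = 2"
  proof
    fix c assume "c \<in> ?P1"
    then obtain a where a: "a \<in> W" "c = {a, p a}" by auto
    then have "a \<noteq> p a" using pn by metis
    then show "card c = 2" using a by simp
  qed
  have fP1: "finite ?P1" using finW by simp
  have fU: "finite (\<Union>?P1)" using U1 finW by simp
  have "2 * card ?P1 = card (\<Union>?P1)"
  proof (rule card_partition[OF fP1 fU])
    show "\<And>c. c \<in> ?P1 \<Longrightarrow> card c = 2" by (rule card2[rule_format])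
    show "\<And>c1 c2. c1 \<in> ?P1 \<Longrightarrow> c2 \<in> ?P1 \<Longrightarrow> c1 \<noteq> c2 \<Longrightarrow> c1 \<inter> c2 = {}" by (rule disj1[rule_format])
  qed
  then have c1: "2 * card ?P1 = card W" using U1 by simp
  have c2: "card ?P2 \<le> card S - card W"
    using card_image_le[of "S - W" "\<lambda>u. {u}"] fin card_Diff_subset[OF finW WS] by simp
  have "chi S E \<le> card (?P1 \<union> ?P2)"
  proof (rule chi_le_partition)
    show "finite (?P1 \<union> ?P2)" using finW fin by auto
    show "\<Union>(?P1 \<union> ?P2) = S" using U1 WS by auto
    show "\<forall>B\<in>?P1 \<union> ?P2. \<forall>B'\<in>?P1 \<union> ?P2. B \<noteq> B' \<longrightarrow> B \<inter> B' = {}"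
    proof (intro ballI impI)
      fix B B' assume BB: "B \<in> ?P1 \<union> ?P2" "B' \<in> ?P1 \<union> ?P2" "B \<noteq> B'"
      show "B \<inter> B' = {}"
      proof (cases "B \<in> ?P1")
        case True
        then have BW: "B \<subseteq> W" using pW by auto
        show ?thesis
        proof (cases "B' \<in> ?P1")
          case True show ?thesis using disj1[rule_format, OF \<open>B \<in> ?P1\<close> True BB(3)] .
        next
          case False
          then obtain u where "u \<in> S - W" "B' = {u}" using BB by blast
          then show ?thesis using BW by blast
        qed
      next
        case False
        then obtain u where u: "u \<in> S - W" "B = {u}" using BB by blast
        show ?thesis
        proof (cases "B' \<in> ?P1")
          case True
          then have "B' \<subseteq> W" using pW by auto
          then show ?thesis using u by blast
        next
          case False
          then obtain v where "v \<in> S - W" "B' = {v}" using BB by blast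
          then show ?thesis using u BB by blast
        qed
      qed
    qed
    show "\<forall>B\<in>?P1 \<union> ?P2. \<forall>u\<in>B. \<forall>v\<in>B. \<not> E u v"
    proof (intro ballI)
      fix B u v assume B: "B \<in> ?P1 \<union> ?P2" and uv: "u \<in> B" "v \<in> B"
      show "\<not> E u v"
      proof (cases "B \<in> ?P1")
        case True
        then obtain a where a: "a \<in> W" "B = {a, p a}" by blast
        have n1: "\<not> E a (p a)" using pe[OF a(1)] .
        have n2: "\<not> E (p a) a" using pe[OF pW[OF a(1)]] pp[OF a(1)] by simp
        have "u = a \<or> u = p a" "v = a \<or> v = p a" using uv a(2) by auto
        then show ?thesis using n1 n2 irr by auto
      next
        case False
        then obtain w where "B = {w}" using B by blast
        then show ?thesis using uv irr by auto
      qed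
    qed
  qed
  also have "\<dots> \<le> card ?P1 + card ?P2" by (rule card_Un_le)
  finally show ?thesis using c1 c2 WS card_mono[OF fin WS] by linarith
qed

lemma key:
  assumes fin: "finite S" and ne: "S \<noteq> {}" and irr: "\<forall>v. \<not> E v v"
    and sym: "\<forall>u v. E u v \<longrightarrow> E v u"
    and tri: "\<forall>a\<in>S. \<forall>b\<in>S. \<forall>c\<in>S. a \<noteq> b \<and> a \<noteq> c \<and> b \<noteq> c \<longrightarrow> E a b \<or> E a c \<or> E b c"
  shows "\<exists>W x K1 K2. x \<in> S \<and> K1 \<subseteq> S \<and> K2 \<subseteq> S \<and> is_clique E K1 \<and> is_clique E K2 \<and>
     2 * chi S E + card W \<le> 2 * card S \<and> W \<subseteq> S \<and>
     2 * (card S - card W) + card {y\<in>S. y \<noteq> x \<and> \<not> E x y} \<le> card K1 + card K2"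
proof -
  have "\<exists>z. (case z of (W, p) \<Rightarrow> matchp S E W p) \<and>
      (\<forall>y. (case y of (W, p) \<Rightarrow> matchp S E W p) \<longrightarrow> (case y of (W, p) \<Rightarrow> card W) \<le> (case z of (W, p) \<Rightarrow> card W))"
  proof (rule Lattices_Big.ex_has_greatest_nat[where k="({}, id)" and b = "card S + 1"])
    show "case ({}, id) of (W, p) \<Rightarrow> matchp S E W p" unfolding matchp_def by simp
    show "\<forall>y. (case y of (W, p) \<Rightarrow> matchp S E W p) \<longrightarrow> (case y of (W, p) \<Rightarrow> card W) < card S + 1"
      using card_mono[OF fin] unfolding matchp_def by fastforce
  qed
  then obtain W p where m: "matchp S E W p" and mx: "\<And>W' p'. matchp S E W' p' \<Longrightarrow> card W' \<le> card W"
    by fastforce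
  have WS: "W \<subseteq> S" and pW: "\<And>a. a \<in> W \<Longrightarrow> p a \<in> W" and pn: "\<And>a. a \<in> W \<Longrightarrow> p a \<noteq> a"
    and pp: "\<And>a. a \<in> W \<Longrightarrow> p (p a) = a" and pe: "\<And>a. a \<in> W \<Longrightarrow> \<not> E a (p a)"
    using m unfolding matchp_def by auto
  have finW: "finite W" using WS fin finite_subset by blast
  have symE: "\<And>u v. E u v \<Longrightarrow> E v u" using sym by blast
  have irrE: "\<And>v. \<not> E v v" using irr by blast
  define U where "U = S - W"
  have cardU: "card U = card S - card W" unfolding U_def using card_Diff_subset[OF finW WS] .
  have finU: "finite U" unfolding U_def using fin by simp
  have two: "card (insert u (insert w W)) = card W + 2" if "u \<notin> W" "w \<notin> W" "u \<noteq> w" for u w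
    using that finW by simp
  have Ucl: "E u w" if uw: "u \<in> U" "w \<in> U" "u \<noteq> w" for u w
  proof (rule ccontr)
    assume ne: "\<not> E u w"
    have "matchp S E (insert u (insert w W)) (p(u := w, w := u))"
      unfolding matchp_def using uw ne WS pW pn pp pe symE unfolding U_def
      by (auto; metis)
    then have "card (insert u (insert w W)) \<le> card W" by (rule mx)
    then show False using two[of u w] uw unfolding U_def by simp
  qed
  have inW: "a \<in> W" if "x \<in> U" "a \<in> S" "a \<noteq> x" "\<not> E x a" for x a
    using Ucl[of x a] that unfolding U_def by blast
  have cfact: "E (p a) u" if h: "x \<in> U" "a \<in> S" "a \<noteq> x" "\<not> E x a" "u \<in> U" for x a u
  proof (rule ccontr)
    assume ne: "\<not> E (p a) u"
    have aW: "a \<in> W" using inW h by blast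
    show False
    proof (cases "u = x")
      case True
      have "x \<in> S" "p a \<in> S" using h WS pW aW unfolding U_def by auto
      moreover have "x \<noteq> p a" using h pW aW unfolding U_def by auto
      ultimately show False using tri h ne True pn[OF aW] pe[OF aW] symE by metis
    next
      case False
      have d: "x \<notin> W" "u \<notin> W" "p a \<in> W" "p a \<noteq> a" "p (p a) = a" using h aW pW pn pp unfolding U_def by auto
      let ?q = "p(x := a, a := x, p a := u, u := p a)"
      have "matchp S E (insert x (insert u W)) ?q"
        unfolding matchp_def
      proof (rule conjI)
        show "insert x (insert u W) \<subseteq> S" using h WS unfolding U_def by auto
      next
        show "\<forall>z\<in>insert x (insert u W). ?q z \<in> insert x (insert u W) \<and> ?q z \<noteq> z \<and> ?q (?q z) = z \<and> \<not> E z (?q z)"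
      proof (rule ballI)
        fix z assume z: "z \<in> insert x (insert u W)"
        consider "z = x" | "z = u" | "z = a" | "z = p a" | "z \<in> W" "z \<noteq> a" "z \<noteq> p a" using z by blast
        then show "?q z \<in> insert x (insert u W) \<and> ?q z \<noteq> z \<and> ?q (?q z) = z \<and> \<not> E z (?q z)"
        proof cases
          case 1 then show ?thesis using d False aW h symE by auto
        next
          case 2 then show ?thesis using d False aW h symE ne by auto
        next
          case 3 then show ?thesis using d False aW h symE by auto
        next
          case 4 then show ?thesis using d False aW h symE ne by auto
        next
          case 5
          have "p z \<in> W" "p z \<noteq> a" "p z \<noteq> p a" "p z \<noteq> z" "p (p z) = z" "\<not> E z (p z)"
            using 5 pW pp pn pe d by metis+
          then show ?thesis using 5 d False by auto
        qed
      qed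
      qed
      then have "card (insert x (insert u W)) \<le> card W" by (rule mx)
      then show False using two[of x u] d False by simp
    qed
  qed
  have efact: "E (p a) (p b)" if h: "x \<in> U" "a \<in> S" "b \<in> S" "a \<noteq> x" "b \<noteq> x" "\<not> E x a" "\<not> E x b"
      "a \<noteq> b" "w \<in> U" "w \<noteq> x" "\<not> E a w" for x a b w
  proof (rule ccontr)
    assume ne: "\<not> E (p a) (p b)"
    have aW: "a \<in> W" and bW: "b \<in> W" using inW h by blast+
    have xS: "x \<in> S" using h unfolding U_def by auto
    show False
    proof (cases "a = p b")
      case True
      then have "\<not> E a b" using pe[OF bW] symE by metis
      then show False using tri xS h by metis
    next
      case False
      note apb = False
      have bpa: "b \<noteq> p a" using apb pp aW by auto
      have ppab: "p a \<noteq> p b" using pp aW bW h(8) by metis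
      have d: "x \<notin> W" "w \<notin> W" "p a \<in> W" "p b \<in> W" "p a \<noteq> a" "p b \<noteq> b" "p (p a) = a" "p (p b) = b"
        using h aW bW pW pn pp unfolding U_def by auto
      have dd: "x \<noteq> w" "x \<noteq> a" "x \<noteq> b" "x \<noteq> p a" "x \<noteq> p b" "w \<noteq> a" "w \<noteq> b"
        "w \<noteq> p a" "w \<noteq> p b" "a \<noteq> b" "a \<noteq> p a" "a \<noteq> p b" "b \<noteq> p a" "b \<noteq> p b" "p a \<noteq> p b"
        using d aW bW h apb bpa ppab by metis+
      note dd2 = dd[THEN not_sym]
      have nE: "\<not> E x b" "\<not> E b x" "\<not> E w a" "\<not> E a w" "\<not> E (p a) (p b)" "\<not> E (p b) (p a)"
        using h ne symE by metis+
      let ?q = "p(w := a, a := w, p a := p b, p b := p a, b := x, x := b)"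
      have "matchp S E (insert x (insert w W)) ?q"
        unfolding matchp_def
      proof (rule conjI)
        show "insert x (insert w W) \<subseteq> S" using h WS unfolding U_def by auto
      next
        show "\<forall>z\<in>insert x (insert w W). ?q z \<in> insert x (insert w W) \<and> ?q z \<noteq> z \<and> ?q (?q z) = z \<and> \<not> E z (?q z)"
      proof (rule ballI)
        fix z assume z: "z \<in> insert x (insert w W)"
        consider "z = x" | "z = w" | "z = a" | "z = p a" | "z = b" | "z = p b"
          | "z \<in> W" "z \<noteq> a" "z \<noteq> p a" "z \<noteq> b" "z \<noteq> p b" using z by blast
        then show "?q z \<in> insert x (insert w W) \<and> ?q z \<noteq> z \<and> ?q (?q z) = z \<and> \<not> E z (?q z)"
        proof cases
          case 1 then show ?thesis using d dd dd2 nE aW bW by simp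
        next
          case 2 then show ?thesis using d dd dd2 nE aW bW by simp
        next
          case 3 then show ?thesis using d dd dd2 nE aW bW by simp
        next
          case 4 then show ?thesis using d dd dd2 nE aW bW by simp
        next
          case 5 then show ?thesis using d dd dd2 nE aW bW by simp
        next
          case 6 then show ?thesis using d dd dd2 nE aW bW by simp
        next
          case 7
          have "p z \<in> W" "p z \<noteq> a" "p z \<noteq> p a" "p z \<noteq> b" "p z \<noteq> p b" "p z \<noteq> z" "p (p z) = z" "\<not> E z (p z)"
            using 7 pW pp pn pe d by metis+
          moreover have "z \<noteq> x" "z \<noteq> w" "p z \<noteq> x" "p z \<noteq> w" using 7 d \<open>p z \<in> W\<close> by auto
          ultimately show ?thesis using 7 by simp
        qed
      qed
      qed
      then have "card (insert x (insert w W)) \<le> card W" by (rule mx)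
      then show False using two[of x w] d h by simp
    qed
  qed
  have chiS: "2 * chi S E + card W \<le> 2 * card S" by (rule chi_matching[OF fin m irr])
  show ?thesis
  proof (cases "U = {}")
    case True
    obtain x where x: "x \<in> S" using ne by blast
    let ?N = "{y\<in>S. y \<noteq> x \<and> \<not> E x y}"
    have cl: "is_clique E ?N" unfolding is_clique_def
    proof (intro ballI impI)
      fix y z assume yz: "y \<in> ?N" "z \<in> ?N" "y \<noteq> z"
      then show "E y z" using tri[rule_format, of x y z] x by auto
    qed
    have "card S - card W = 0" using True cardU by simp
    then have "2 * (card S - card W) + card ?N \<le> card ?N + card ?N" by simp
    note ineq = this
    show ?thesis
      apply (rule exI[of _ W], rule exI[of _ x], rule exI[of _ ?N], rule exI[of _ ?N])
      using x cl chiS WS ineq by (intro conjI; blast?)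
  next
    case False
    then obtain x where xU: "x \<in> U" by blast
    have xS: "x \<in> S" using xU unfolding U_def by auto
    define N where "N = {y\<in>S. y \<noteq> x \<and> \<not> E x y}"
    define P where "P = {a\<in>N. \<forall>u\<in>U. u \<noteq> x \<longrightarrow> E a u}"
    define Sh where "Sh = N - P"
    have NW: "N \<subseteq> W" using inW xU unfolding N_def by blast
    have finN: "finite N" using NW finW finite_subset by blast
    have PN0: "P \<subseteq> N" unfolding P_def by blast
    have finP0: "finite P" using finN PN0 finite_subset by blast
    have NPSh: "card N = card P + card Sh"
    proof -
      have "card Sh = card N - card P" unfolding Sh_def by (rule card_Diff_subset[OF finP0 PN0])
      moreover have "card P \<le> card N" by (rule card_mono[OF finN PN0])
      ultimately show ?thesis by simp
    qed
    have injp: "inj_on p W"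
    proof (rule inj_onI)
      fix a b assume h: "a \<in> W" "b \<in> W" "p a = p b"
      have "a = p (p a)" using pp[OF h(1)] by simp
      also have "\<dots> = p (p b)" using h(3) by (rule arg_cong)
      also have "\<dots> = b" using pp[OF h(2)] .
      finally show "a = b" .
    qed
    have pNW: "p ` N \<subseteq> W" using NW pW by blast
    have shared: "\<exists>w\<in>U. w \<noteq> x \<and> \<not> E a w" if "a \<in> Sh" for a
      using that unfolding Sh_def P_def by blast
    have Nfacts: "a \<in> S" "a \<noteq> x" "\<not> E x a" if "a \<in> N" for a
      using that unfolding N_def by auto
    have pcl: "E (p a) (p b)" if ab: "a \<in> N" "b \<in> N" "a \<noteq> b" "a \<in> Sh \<or> b \<in> Sh" for a b
    proof -
      consider "a \<in> Sh" | "b \<in> Sh" using ab by blast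
      then show ?thesis
      proof cases
        case 1
        then obtain w where w: "w\<in>U" "w \<noteq> x" "\<not> E a w" using shared by blast
        show ?thesis
          by (rule efact[OF xU Nfacts(1)[OF ab(1)] Nfacts(1)[OF ab(2)] Nfacts(2)[OF ab(1)]
            Nfacts(2)[OF ab(2)] Nfacts(3)[OF ab(1)] Nfacts(3)[OF ab(2)] ab(3) w])
      next
        case 2
        then obtain w where w: "w\<in>U" "w \<noteq> x" "\<not> E b w" using shared by blast
        have "b \<noteq> a" using ab(3) by blast
        have "E (p b) (p a)"
          by (rule efact[OF xU Nfacts(1)[OF ab(2)] Nfacts(1)[OF ab(1)] Nfacts(2)[OF ab(2)]
            Nfacts(2)[OF ab(1)] Nfacts(3)[OF ab(2)] Nfacts(3)[OF ab(1)] \<open>b \<noteq> a\<close> w])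
        then show ?thesis by (rule symE)
      qed
    qed
    have UpS: "U \<subseteq> S" unfolding U_def by auto
    have pNS: "p ` N \<subseteq> S" using pNW WS by blast
    have UW: "U \<inter> W = {}" unfolding U_def by auto
    show ?thesis
    proof (cases "P = {}")
      case True
      define K where "K = U \<union> p ` N"
      have Ksub: "K \<subseteq> S" unfolding K_def using UpS pNS by blast
      have Kcl: "is_clique E K" unfolding is_clique_def
      proof (intro ballI impI)
        fix y z assume yz: "y \<in> K" "z \<in> K" "y \<noteq> z"
        show "E y z"
        proof (cases "y \<in> U")
          case yU: True
          show ?thesis
          proof (cases "z \<in> U")
            case True then show ?thesis using Ucl yU yz by blast
          next
            case False
            then obtain b where b: "b \<in> N" "z = p b" using yz K_def by blast
            have "E (p b) y" by (rule cfact[OF xU Nfacts(1)[OF b(1)] Nfacts(2)[OF b(1)] Nfacts(3)[OF b(1)] yU])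
            then show ?thesis using b(2) symE[OF \<open>E (p b) y\<close>] by simp
          qed
        next
          case yU: False
          then obtain a where a: "a \<in> N" "y = p a" using yz K_def by blast
          show ?thesis
          proof (cases "z \<in> U")
            case True
            have "E (p a) z" by (rule cfact[OF xU Nfacts(1)[OF a(1)] Nfacts(2)[OF a(1)] Nfacts(3)[OF a(1)] True])
            then show ?thesis using a(2) by simp
          next
            case False
            then obtain b where b: "b \<in> N" "z = p b" using yz K_def by blast
            have "a \<noteq> b" using a b yz by blast
            moreover have "a \<in> Sh" unfolding Sh_def using a \<open>P = {}\<close> by blast
            ultimately show ?thesis using pcl a b by blast
          qed
        qed
      qed
      have "card K = card U + card (p ` N)"
        unfolding K_def using finU finN UW pNW by (intro card_Un_disjoint) auto
      also have "card (p ` N) = card N" using card_image inj_on_subset[OF injp NW] by blast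
      finally have cK: "card K = card U + card N" .
      have "2 * (card S - card W) + card N \<le> card K + card K" using cK cardU by simp
      note ineq = this
    show ?thesis
        apply (rule exI[of _ W], rule exI[of _ x], rule exI[of _ K], rule exI[of _ K])
        using xS Ksub Kcl chiS WS ineq unfolding N_def by (intro conjI; blast)
    next
      case False
      then obtain q where qP: "q \<in> P" by blast
      have PN: "P \<subseteq> N" unfolding P_def by blast
      have qN: "q \<in> N" using qP PN by blast
      have qSh: "q \<notin> Sh" using qP unfolding Sh_def by blast
      define K1 where "K1 = (U - {x}) \<union> P"
      define K2 where "K2 = U \<union> p ` (insert q Sh)"
      have ShN: "Sh \<subseteq> N" unfolding Sh_def by blast
      have K1sub: "K1 \<subseteq> S" unfolding K1_def using UpS PN NW WS by blast
      have K2sub: "K2 \<subseteq> S" unfolding K2_def using UpS pNS qN ShN by blast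
      have K1cl: "is_clique E K1" unfolding is_clique_def
      proof (intro ballI impI)
        fix y z assume yz: "y \<in> K1" "z \<in> K1" "y \<noteq> z"
        show "E y z"
        proof (cases "y \<in> P")
          case yP: True
          show ?thesis
          proof (cases "z \<in> P")
            case True
            then have yzN: "y \<in> N" "z \<in> N" using yP PN by auto
            have "y \<in> S" "z \<in> S" "x \<noteq> y" "x \<noteq> z" "\<not> E x y" "\<not> E x z"
              using Nfacts[OF yzN(1)] Nfacts[OF yzN(2)] by auto
            then show ?thesis using tri[rule_format, of x y z] xS yz(3) by blast
          next
            case False
            then have "z \<in> U" "z \<noteq> x" using yz K1_def by auto
            then show ?thesis using yP unfolding P_def by blast
          qed
        next
          case yP: False
          then have y: "y \<in> U" "y \<noteq> x" using yz K1_def by auto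
          show ?thesis
          proof (cases "z \<in> P")
            case True
            then have "E z y" using y unfolding P_def by blast
            then show ?thesis by (rule symE)
          next
            case False
            then have "z \<in> U" using yz K1_def by auto
            then show ?thesis using Ucl y yz by blast
          qed
        qed
      qed
      have K2cl: "is_clique E K2" unfolding is_clique_def
      proof (intro ballI impI)
        fix y z assume yz: "y \<in> K2" "z \<in> K2" "y \<noteq> z"
        show "E y z"
        proof (cases "y \<in> U")
          case yU: True
          show ?thesis
          proof (cases "z \<in> U")
            case True then show ?thesis using Ucl yU yz by blast
          next
            case False
            then obtain b where "b \<in> insert q Sh" "z = p b" using yz K2_def by blast
            then have b: "b \<in> N" "z = p b" using qN ShN by auto
            have "E (p b) y" by (rule cfact[OF xU Nfacts(1)[OF b(1)] Nfacts(2)[OF b(1)] Nfacts(3)[OF b(1)] yU])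
            then show ?thesis using b(2) symE[OF \<open>E (p b) y\<close>] by simp
          qed
        next
          case yU: False
          then obtain a where a: "a \<in> insert q Sh" "y = p a" using yz K2_def by blast
          have aN: "a \<in> N" using a qN ShN by auto
          show ?thesis
          proof (cases "z \<in> U")
            case True
            have "E (p a) z" by (rule cfact[OF xU Nfacts(1)[OF aN] Nfacts(2)[OF aN] Nfacts(3)[OF aN] True])
            then show ?thesis using a(2) by simp
          next
            case False
            then obtain b where b: "b \<in> insert q Sh" "z = p b" using yz K2_def by blast
            have bN: "b \<in> N" using b qN ShN by auto
            have "a \<noteq> b" using a b yz by blast
            moreover have "a \<in> Sh \<or> b \<in> Sh" using a b \<open>a \<noteq> b\<close> by blast
            ultimately show ?thesis using pcl a b aN bN by blast
          qed
        qed
      qed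
      have finP: "finite P" using PN finN finite_subset by blast
      have finSh: "finite Sh" using ShN finN finite_subset by blast
      have f1: "finite (U - {x})" using finU by blast
      have d1: "(U - {x}) \<inter> P = {}" using UW PN NW by blast
      have "card K1 = card (U - {x}) + card P" unfolding K1_def by (rule card_Un_disjoint[OF f1 finP d1])
      also have "card (U - {x}) = card U - 1" using xU finU by simp
      finally have cK1: "card K1 = card U - 1 + card P" .
      have sub: "insert q Sh \<subseteq> W" using qN ShN NW by blast
      have f2: "finite (p ` insert q Sh)" using finSh by blast
      have d2: "U \<inter> p ` insert q Sh = {}" using UW sub pW by blast
      have "card K2 = card U + card (p ` (insert q Sh))" unfolding K2_def by (rule card_Un_disjoint[OF finU f2 d2])
      also have "card (p ` (insert q Sh)) = card (insert q Sh)" by (rule card_image[OF inj_on_subset[OF injp sub]])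
      also have "\<dots> = card Sh + 1" using qSh finSh by simp
      finally have cK2: "card K2 = card U + (card Sh + 1)" .
      have "card U \<noteq> 0" using xU finU by auto
      then have e1: "card K1 + 1 = card U + card P" using cK1 by linarith
      have "2 * (card S - card W) + card N \<le> card K1 + card K2" using e1 cK2 cardU NPSh by linarith
      note ineq = this
    show ?thesis
        apply (rule exI[of _ W], rule exI[of _ x], rule exI[of _ K1], rule exI[of _ K2])
        using xS K1sub K2sub K1cl K2cl chiS WS ineq unfolding N_def by (intro conjI; blast)
    qed
  qed
qed


theorem corollary11:
  fixes V :: "'a set" and E :: "'a \<Rightarrow> 'a \<Rightarrow> bool"
  assumes "simple_graph V E"
  shows "real (chi V E) \<le>
    (1/2) * (real (omega V E) + (real (max_degree V E) + 1 + real (card V)) / 2)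
      - real_of_int (eta V E) / 4"
proof -
  have fin: "finite V" and ne: "V \<noteq> {}" and inV: "\<And>u v. E u v \<Longrightarrow> u \<in> V \<and> v \<in> V"
    and symE: "\<And>u v. E u v \<Longrightarrow> E v u" and irrE: "\<And>v. \<not> E v v"
    using assms unfolding simple_graph_def by blast+
  have irr: "\<forall>v. \<not> E v v" using irrE by blast
  define val where "val H = int (card H) - 3 * int (chi H E)" for H
  let ?C = "{int (card H) - 3 * int (chi H E) | H. H \<subseteq> V \<and> H \<noteq> {}}"
  have Cfin: "finite ?C"
    by (rule finite_subset[of _ "(\<lambda>H. int (card H) - 3 * int (chi H E)) ` Pow V"]) (use fin in auto)
  have Cne: "?C \<noteq> {}" using ne by blast
  have eta_ge: "val H \<le> eta V E" if "H \<subseteq> V" "H \<noteq> {}" for H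
    unfolding eta_def val_def
    by (rule Max_ge[OF Cfin], rule CollectI, rule exI[of _ H]) (use that in simp)
  have "eta V E \<in> ?C" unfolding eta_def using Max_in[OF Cfin Cne] .
  then obtain H0 where H00: "H0 \<subseteq> V" "H0 \<noteq> {}" "eta V E = int (card H0) - 3 * int (chi H0 E)"
    by blast
  then have H0: "H0 \<subseteq> V" "H0 \<noteq> {}" "val H0 = eta V E" unfolding val_def by simp_all
  have "\<exists>H. (H \<subseteq> V \<and> H \<noteq> {} \<and> val H = eta V E) \<and>
      (\<forall>H'. (H' \<subseteq> V \<and> H' \<noteq> {} \<and> val H' = eta V E) \<longrightarrow> card H' \<le> card H)"
  proof (rule Lattices_Big.ex_has_greatest_nat[where k = H0 and b = "card V + 1"])
    show "H0 \<subseteq> V \<and> H0 \<noteq> {} \<and> val H0 = eta V E" using H0 by blast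
    show "\<forall>y. y \<subseteq> V \<and> y \<noteq> {} \<and> val y = eta V E \<longrightarrow> card y < card V + 1"
    proof (intro allI impI)
      fix y assume "y \<subseteq> V \<and> y \<noteq> {} \<and> val y = eta V E"
      then have "card y \<le> card V" using card_mono[OF fin] by blast
      then show "card y < card V + 1" by simp
    qed
  qed
  then obtain H where H: "H \<subseteq> V" "H \<noteq> {}" "val H = eta V E"
    and Hmax: "\<And>H'. H' \<subseteq> V \<Longrightarrow> H' \<noteq> {} \<Longrightarrow> val H' = eta V E \<Longrightarrow> card H' \<le> card H"
    by blast
  have finH: "finite H" using H fin finite_subset by blast
  define k where "k = chi H E"
  obtain cH where cH: "proper_colouring H E k cH" using chi_colouring[of H E, OF finH irr] unfolding k_def by blast
  have cHlt: "\<And>v. v \<in> H \<Longrightarrow> cH v < k" and cHne: "\<And>u v. u \<in> H \<Longrightarrow> v \<in> H \<Longrightarrow> E u v \<Longrightarrow> cH u \<noteq> cH v"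
    using cH unfolding proper_colouring_def by blast+
  define S where "S = V - H"
  have finS: "finite S" unfolding S_def using fin by simp
  have VHS: "V = H \<union> S" unfolding S_def using H by blast
  have HS: "H \<inter> S = {}" unfolding S_def by blast
  have cardV: "card V = card H + card S" using card_Un_disjoint[OF finH finS HS] VHS by simp
  have valH: "val H = int (card H) - 3 * int k" unfolding val_def k_def by simp
  have etaH: "eta V E = int (card H) - 3 * int k" using H(3) valH by simp
  have nb: "\<exists>u\<in>H. E x u \<and> cH u = i" if x: "x \<in> S" and i: "i < k" for x i
  proof (rule ccontr)
    assume no: "\<not> (\<exists>u\<in>H. E x u \<and> cH u = i)"
    have xH: "x \<notin> H" using x unfolding S_def by blast
    have "proper_colouring (insert x H) E k (cH(x := i))"
      unfolding proper_colouring_def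
    proof (intro conjI ballI impI notI)
      fix v assume "v \<in> insert x H"
      then show "(cH(x := i)) v < k" using cHlt i by auto
    next
      fix u v assume uv: "u \<in> insert x H" "v \<in> insert x H" "E u v" "(cH(x := i)) u = (cH(x := i)) v"
      show False
      proof (cases "u = x")
        case True
        then have "v \<noteq> x" using uv irrE by blast
        then have "v \<in> H" "cH v = i" using uv True by auto
        then show False using uv True no by blast
      next
        case False
        note ux = False
        show False
        proof (cases "v = x")
          case True
          then have "u \<in> H" "cH u = i" using uv ux by auto
          moreover have "E x u" using symE[OF uv(3)] True by simp
          ultimately show False using no by blast
        next
          case False
          then have "u \<in> H" "v \<in> H" "cH u = cH v" using uv ux by auto
          then show False using cHne uv(3) by blast
        qed
      qed
    qed
    then have "chi (insert x H) E \<le> k" by (rule chi_le)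
    moreover have "card (insert x H) = card H + 1" using xH finH by simp
    ultimately have "val (insert x H) \<ge> val H + 1" unfolding val_def k_def by simp
    moreover have "val (insert x H) \<le> eta V E"
      using eta_ge[of "insert x H"] x H(1) unfolding S_def by blast
    ultimately show False using H(3) by simp
  qed
  have tri: "\<forall>a\<in>S. \<forall>b\<in>S. \<forall>c\<in>S. a \<noteq> b \<and> a \<noteq> c \<and> b \<noteq> c \<longrightarrow> E a b \<or> E a c \<or> E b c"
  proof (intro ballI impI, rule ccontr)
    fix a b c assume abc: "a \<in> S" "b \<in> S" "c \<in> S" "a \<noteq> b \<and> a \<noteq> c \<and> b \<noteq> c"
      and no: "\<not> (E a b \<or> E a c \<or> E b c)"
    let ?J = "{a, b, c}"
    have JS: "?J \<subseteq> S" using abc by blast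
    have n6: "\<not> E a b" "\<not> E a c" "\<not> E b c" "\<not> E b a" "\<not> E c a" "\<not> E c b"
      using no symE by metis+
    have indJ: "\<not> E u v" if "u \<in> ?J" "v \<in> ?J" for u v
      using that n6 irrE by auto
    have "proper_colouring (H \<union> ?J) E (k + 1) (\<lambda>v. if v \<in> H then cH v else k)"
      unfolding proper_colouring_def
    proof (intro conjI ballI impI notI)
      fix v assume "v \<in> H \<union> ?J"
      show "(if v \<in> H then cH v else k) < k + 1"
      proof (cases "v \<in> H")
        case True then show ?thesis using cHlt[OF True] by simp
      next
        case False then show ?thesis by simp
      qed
    next
      fix u v assume uv: "u \<in> H \<union> ?J" "v \<in> H \<union> ?J" "E u v"
        "(if u \<in> H then cH u else k) = (if v \<in> H then cH v else k)"
      show False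
      proof (cases "u \<in> H")
        case True
        note uH = True
        show False
        proof (cases "v \<in> H")
          case True
          then show False using uv uH cHne by auto
        next
          case False
          then show False using uv uH cHlt[OF uH] by auto
        qed
      next
        case False
        note uH = False
        show False
        proof (cases "v \<in> H")
          case True
          then show False using uv uH cHlt[OF True] by auto
        next
          case False
          then have "u \<in> ?J" "v \<in> ?J" using uv uH by auto
          then show False using indJ uv(3) by blast
        qed
      qed
    qed
    then have chiJ: "chi (H \<union> ?J) E \<le> k + 1" by (rule chi_le)
    have HJ: "H \<inter> ?J = {}" using HS JS by blast
    have c3: "card ?J = 3" using abc by simp
    have cardJ: "card (H \<union> ?J) = card H + 3"
      using card_Un_disjoint[OF finH _ HJ] c3 by simp
    have "val (H \<union> ?J) \<ge> val H" unfolding valH unfolding val_def using chiJ cardJ by simp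
    moreover have "val (H \<union> ?J) \<le> eta V E"
      using eta_ge[of "H \<union> ?J"] JS H(1) unfolding S_def by blast
    ultimately have "val (H \<union> ?J) = eta V E" using H(3) by simp
    then have "card (H \<union> ?J) \<le> card H" using Hmax[of "H \<union> ?J"] JS H(1) unfolding S_def by blast
    then show False using cardJ by simp
  qed
  have omega_ge: "card K \<le> omega V E" if "K \<subseteq> V" "is_clique E K" for K
  proof -
    have "finite {card K | K. K \<subseteq> V \<and> is_clique E K}"
    proof (rule finite_subset[of _ "{0..card V}"])
      show "{card K | K. K \<subseteq> V \<and> is_clique E K} \<subseteq> {0..card V}"
      proof
        fix n assume "n \<in> {card K | K. K \<subseteq> V \<and> is_clique E K}"
        then obtain K' where "n = card K'" "K' \<subseteq> V" by blast
        then show "n \<in> {0..card V}" using card_mono[OF fin] by simp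
      qed
    qed simp
    moreover have "card K \<in> {card K | K. K \<subseteq> V \<and> is_clique E K}" using that by blast
    ultimately show ?thesis unfolding omega_def by (rule Max_ge)
  qed
  have deg_le: "degree V E x \<le> max_degree V E" if "x \<in> V" for x
    unfolding max_degree_def using fin that by (intro Max_ge) auto
  have natI: "4 * chi V E + card H \<le> 2 * omega V E + max_degree V E + 1 + card V + 3 * k"
  proof (cases "S = {}")
    case True
    then have "H = V" using VHS by blast
    then have "chi V E = k" unfolding k_def by simp
    moreover have "chi V E \<le> max_degree V E + 1" by (rule chi_le_maxdeg[OF assms])
    ultimately show ?thesis using cardV True by simp
  next
    case False
    have symA: "\<forall>u v. E u v \<longrightarrow> E v u" using symE by blast
    obtain W x K1 K2 where x: "x \<in> S" and K: "K1 \<subseteq> S" "K2 \<subseteq> S" "is_clique E K1" "is_clique E K2"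
      and chiS: "2 * chi S E + card W \<le> 2 * card S" and WS: "W \<subseteq> S"
      and keyi: "2 * (card S - card W) + card {y\<in>S. y \<noteq> x \<and> \<not> E x y} \<le> card K1 + card K2"
      using key[OF finS False irr symA tri] by blast
    have WSc: "card W \<le> card S" using card_mono[OF finS WS] .
    define r where "r = card S - card W"
    have rW: "r + card W = card S" unfolding r_def using WSc by simp
    have chiV: "chi V E \<le> k + chi S E" using chi_union[of H S E, OF finH finS irr] VHS unfolding k_def by simp
    have KV: "K1 \<subseteq> V" "K2 \<subseteq> V" using K VHS by blast+
    have om: "card K1 \<le> omega V E" "card K2 \<le> omega V E"
      using omega_ge[OF KV(1) K(3)] omega_ge[OF KV(2) K(4)] by blast+
    let ?NH = "{u\<in>H. E x u}"
    let ?NS = "{u\<in>S. E x u}"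
    let ?N = "{y\<in>S. y \<noteq> x \<and> \<not> E x y}"
    have finNH: "finite ?NH" using finH by simp
    have "{0..<k} \<subseteq> cH ` ?NH"
    proof
      fix i assume "i \<in> {0..<k}"
      then obtain u where "u \<in> H" "E x u" "cH u = i" using nb[OF x] by auto
      then show "i \<in> cH ` ?NH" by blast
    qed
    then have "k \<le> card (cH ` ?NH)" using card_mono[of "cH ` ?NH" "{0..<k}"] finNH by simp
    also have "\<dots> \<le> card ?NH" using card_image_le[OF finNH] by simp
    finally have kNH: "k \<le> card ?NH" .
    have dNHS: "?NH \<inter> ?NS = {}" using HS by blast
    have "card (?NH \<union> ?NS) = card ?NH + card ?NS"
      by (rule card_Un_disjoint[OF finNH _ dNHS]) (use finS in simp)
    moreover have "card (?NH \<union> ?NS) \<le> degree V E x"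
      unfolding degree_def by (rule card_mono) (use fin VHS in auto)
    ultimately have degx: "k + card ?NS \<le> degree V E x" using kNH by simp
    have Seq: "S = insert x (?NS \<union> ?N)" using x irrE by blast
    have xn: "x \<notin> ?NS \<union> ?N" using irrE by blast
    have dd: "?NS \<inter> ?N = {}" by blast
    have fNS: "finite ?NS" "finite ?N" using finS by simp_all
    have "card (?NS \<union> ?N) = card ?NS + card ?N" by (rule card_Un_disjoint[OF fNS dd])
    moreover have "card S = Suc (card (?NS \<union> ?N))"
      using Seq xn fNS by (metis card_insert_disjoint finite_Un)
    ultimately have cS: "card S = 1 + card ?NS + card ?N" by simp
    have "degree V E x \<le> max_degree V E" using deg_le x VHS by blast
    moreover have "2 * r + card ?N \<le> card K1 + card K2" using keyi unfolding r_def .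
    ultimately show ?thesis using chiV om chiS rW degx cS cardV by linarith
  qed
  have "int (4 * chi V E + card H) \<le> int (2 * omega V E + max_degree V E + 1 + card V + 3 * k)"
    using natI by (simp only: of_nat_le_iff)
  then have intI: "4 * int (chi V E) + eta V E \<le> 2 * int (omega V E) + int (max_degree V E) + 1 + int (card V)"
    using etaH by simp
  have "real_of_int (4 * int (chi V E) + eta V E) \<le>
      real_of_int (2 * int (omega V E) + int (max_degree V E) + 1 + int (card V))"
    using intI by (simp only: of_int_le_iff)
  then have "4 * real (chi V E) + real_of_int (eta V E) \<le>
      2 * real (omega V E) + real (max_degree V E) + 1 + real (card V)" by simp
  then have h4: "real (chi V E) * 4 \<le> 2 * real (omega V E) + real (max_degree V E) + 1 + real (card V)
      - real_of_int (eta V E)" by linarith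
  have eq: "(1/2) * (real (omega V E) + (real (max_degree V E) + 1 + real (card V)) / 2)
      - real_of_int (eta V E) / 4 = (2 * real (omega V E) + real (max_degree V E) + 1 + real (card V)
      - real_of_int (eta V E)) / 4" by (simp add: field_simps)
  have "real (chi V E) \<le> (2 * real (omega V E) + real (max_degree V E) + 1 + real (card V)
      - real_of_int (eta V E)) / 4" using h4 by (simp add: le_divide_eq)
  then show ?thesis unfolding eq .
qed

end
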